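(* Let $$L=\widehat{\operatorname{Sym}_L}+a_{20}D_x^2+a_{11}D_xD_y+a_{02}D_y^2+a_{10}D_x+a_{01}D_y+a_{00},$$ with all $a_{ij}\in K$. (1) If $\operatorname{Sym}_L=XY(X+Y)$, so $\widehat{\operatorname{Sym}_L}=D_x^2D_y+D_xD_y^2$, then $$\Big(a_{02}^2-a_{11}a_{02}+a_{01}+\partial_x(a_{02}-a_{11})\Big)D_y+a_{00}-a_{02}a_{10}+a_{02}^2a_{20}+2a_{02}\partial_x(a_{20})-\partial_x(a_{10})+a_{20}\partial_x(a_{02})+\partial_x^2(a_{20})$$ is a common obstacle to factorization of $L$ of type $(X)(YX+YY)$. (2) If $\operatorname{Sym}_L=X^2Y$, so $\widehat{\operatorname{Sym}_L}=D_x^2D_y$, then $$\Big(a_{10}-a_{20}a_{11}-\partial_y(a_{11})\Big)D_x+a_{00}-a_{20}a_{01}+a_{20}^2a_{02}+2a_{20}\partial_y(a_{02})-\partial_y(a_{01})+a_{02}\partial_y(a_{20})+\partial_y^2(a_{02})$$ is a common obstacle to factorization of $L$ of type $(Y)(XX)$.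
   Context: $K$ is a field with two commuting derivations $\partial_x,\partial_y$, and $K[D_x,D_y]$ is the ring of linear differential operators over $K$: $D_xD_y=D_yD_x$, $D_x\circ f=fD_x+\partial_x(f)$ and $D_y\circ f=fD_y+\partial_y(f)$ for $f\in K$. For an operator $M=\sum m_{ij}D_x^iD_y^j$, $\operatorname{ord}(M)$ is the largest $i+j$ with $m_{ij}\ne0$ ($\operatorname{ord}(0)=-\infty$), and the symbol is $\operatorname{Sym}_M=\sum_{i+j=\operatorname{ord}M}m_{ij}X^iY^j$. For a homogeneous polynomial $S=\sum s_{ij}X^iY^j$, $\widehat S=\sum s_{ij}D_x^iD_y^j$. A factorization of type $(S_1)(S_2)$ of $M$ is $M=F_1\circ F_2$ with $\operatorname{Sym}_{F_i}=S_i$. A common obstacle to factorization of $L$ of type $(S_1)(S_2)$ is an operator $R$ such that $L-R$ has a factorization of that type and $R$ has minimal possible order among such operators. *)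

theory Defs
  imports Complex_Main "HOL-Library.Poly_Mapping" "HOL-Library.Extended_Real"
begin

definition diff_field :: "('a::field \<Rightarrow> 'a) \<Rightarrow> ('a \<Rightarrow> 'a) \<Rightarrow> bool" where
  "diff_field dx dy \<longleftrightarrow>
     (\<forall>a b. dx (a + b) = dx a + dx b \<and> dx (a * b) = dx a * b + a * dx b
          \<and> dy (a + b) = dy a + dy b \<and> dy (a * b) = dy a * b + a * dy b
          \<and> dx (dy a) = dy (dx a))"

text \<open>Operators sum m_ij D_x^i D_y^j (and homogeneous polynomials sum s_ij X^i Y^j)
  are represented by their finitely supported coefficient maps (i,j) to m_ij.\<close>
type_synonym 'a dop = "(nat \<times> nat) \<Rightarrow>\<^sub>0 'a"

text \<open>The hat map S to S-hat: replace X^i Y^j by D_x^i D_y^j (identity on coefficient maps).\<close>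
definition hat :: "'a::zero dop \<Rightarrow> 'a dop" where
  "hat S = S"

text \<open>Composition in K[D_x,D_y]:
  (m D_x^a D_y^b) o (n D_x^c D_y^d) =
    sum_{p<=a,q<=b} m (a choose p)(b choose q) dx^p dy^q (n) D_x^(a-p+c) D_y^(b-q+d).\<close>
definition dcomp :: "('a::field \<Rightarrow> 'a) \<Rightarrow> ('a \<Rightarrow> 'a) \<Rightarrow> 'a dop \<Rightarrow> 'a dop \<Rightarrow> 'a dop" where
  "dcomp dx dy M N =
     (\<Sum>(a,b)\<in>Poly_Mapping.keys M. \<Sum>(c,d)\<in>Poly_Mapping.keys N. \<Sum>p\<le>a. \<Sum>q\<le>b.
        Poly_Mapping.single (a - p + c, b - q + d)
          (Poly_Mapping.lookup M (a,b) * of_nat (a choose p) * of_nat (b choose q)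
             * (dx ^^ p) ((dy ^^ q) (Poly_Mapping.lookup N (c,d)))))"

definition dord :: "'a::zero dop \<Rightarrow> ereal" where
  "dord M = (if M = 0 then -\<infinity> else ereal (of_nat (Max ((\<lambda>(i,j). i + j) ` Poly_Mapping.keys M))))"

definition dsym :: "'a::comm_monoid_add dop \<Rightarrow> 'a dop" where
  "dsym M = (\<Sum>(i,j)\<in>Poly_Mapping.keys M.
      if i + j = Max ((\<lambda>(i,j). i + j) ` Poly_Mapping.keys M) then Poly_Mapping.single (i,j) (Poly_Mapping.lookup M (i,j)) else 0)"

definition has_factorization ::
  "('a::field \<Rightarrow> 'a) \<Rightarrow> ('a \<Rightarrow> 'a) \<Rightarrow> 'a dop \<Rightarrow> 'a dop \<Rightarrow> 'a dop \<Rightarrow> bool" where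
  "has_factorization dx dy S1 S2 M \<longleftrightarrow>
     (\<exists>F1 F2. M = dcomp dx dy F1 F2 \<and> dsym F1 = S1 \<and> dsym F2 = S2)"

definition common_obstacle ::
  "('a::field \<Rightarrow> 'a) \<Rightarrow> ('a \<Rightarrow> 'a) \<Rightarrow> 'a dop \<Rightarrow> 'a dop \<Rightarrow> 'a dop \<Rightarrow> 'a dop \<Rightarrow> bool" where
  "common_obstacle dx dy S1 S2 L R \<longleftrightarrow>
     has_factorization dx dy S1 S2 (L - R) \<and>
     (\<forall>R'. has_factorization dx dy S1 S2 (L - R') \<longrightarrow> dord R \<le> dord R')"

abbreviation mon :: "'a::zero \<Rightarrow> nat \<Rightarrow> nat \<Rightarrow> 'a dop" where
  "mon c i j \<equiv> Poly_Mapping.single (i,j) c"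

end

theory Submission
  imports Defs
begin


abbreviation "lk \<equiv> Poly_Mapping.lookup"
abbreviation "ks \<equiv> Poly_Mapping.keys"

lemma funpow_zero: fixes f :: "'a::zero \<Rightarrow> 'a" shows "f 0 = 0 \<Longrightarrow> (f ^^ n) (0::'a::zero) = 0"
  by (induction n) auto

lemma dcomp_superset:
  fixes dx dy :: "'a::field \<Rightarrow> 'a"
  assumes "dx 0 = 0" "dy 0 = 0" "finite A" "finite B" "ks M \<subseteq> A" "ks N \<subseteq> B"
  shows "dcomp dx dy M N = (\<Sum>(a,b)\<in>A. \<Sum>(c,d)\<in>B. \<Sum>p\<le>a. \<Sum>q\<le>b.
        Poly_Mapping.single (a - p + c, b - q + d)
          (lk M (a,b) * of_nat (a choose p) * of_nat (b choose q)
             * (dx ^^ p) ((dy ^^ q) (lk N (c,d)))))"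
proof -
  have inner: "(\<Sum>(c,d)\<in>ks N. \<Sum>p\<le>a. \<Sum>q\<le>b.
        Poly_Mapping.single (a - p + c, b - q + d)
          (lk M (a,b) * of_nat (a choose p) * of_nat (b choose q)
             * (dx ^^ p) ((dy ^^ q) (lk N (c,d)))))
     = (\<Sum>(c,d)\<in>B. \<Sum>p\<le>a. \<Sum>q\<le>b.
        Poly_Mapping.single (a - p + c, b - q + d)
          (lk M (a,b) * of_nat (a choose p) * of_nat (b choose q)
             * (dx ^^ p) ((dy ^^ q) (lk N (c,d)))))" for a b
    by (rule sum.mono_neutral_left) (use assms in \<open>auto simp: in_keys_iff funpow_zero[of dy] funpow_zero[of dx]\<close>)
  show ?thesis
    unfolding dcomp_def
    apply (subst inner)
    by (rule sum.mono_neutral_left) (use assms in \<open>auto simp: in_keys_iff\<close>)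
qed

definition deg :: "nat \<times> nat \<Rightarrow> nat" where "deg = (\<lambda>(i,j). i + j)"

lemma lookup_dsym:
  fixes M :: "'a::comm_monoid_add dop"
  shows   "lk (dsym M) k = (if deg k = Max (deg ` ks M) then lk M k else 0)"
proof -
  define mx where "mx = Max (deg ` ks M)"
  have mx: "Max ((\<lambda>(i,j). i + j) ` ks M) = mx" by (simp add: mx_def deg_def)
  have "lk (dsym M) k = (\<Sum>x\<in>ks M. if x = k then (if deg k = mx then lk M k else 0) else 0)"
    unfolding dsym_def mx lookup_sum
    by (rule sum.cong) (auto simp: lookup_single when_def deg_def)
  also have "\<dots> = (if deg k = mx then lk M k else 0)"
    by (auto simp: in_keys_iff)
  finally show ?thesis by (simp add: mx_def)
qed

lemma dsym_info:
  fixes M :: "'a::comm_monoid_add dop"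
  assumes "dsym M = S" "lk S kz \<noteq> 0"
  shows "Max (deg ` ks M) = deg kz" "k \<in> ks M \<Longrightarrow> deg k \<le> deg kz"
    "deg k = deg kz \<Longrightarrow> lk M k = lk S k"
proof -
  have h: "lk (dsym M) kz \<noteq> 0" using assms by simp
  then show m: "Max (deg ` ks M) = deg kz" unfolding lookup_dsym by (auto split: if_splits)
  show "k \<in> ks M \<Longrightarrow> deg k \<le> deg kz" unfolding m[symmetric] by (rule Max_ge) auto
  show "deg k = deg kz \<Longrightarrow> lk M k = lk S k"
    using m lookup_dsym[of M k] assms(1) by simp
qed

lemma dsym_eq:
  fixes M :: "'a::comm_monoid_add dop"
  assumes "\<And>k. lk M k \<noteq> 0 \<Longrightarrow> deg k \<le> d" "lk M kz \<noteq> 0" "deg kz = d"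
    "\<And>k. lk S k = (if deg k = d then lk M k else 0)"
  shows "dsym M = S"
proof -
  have "Max (deg ` ks M) = d"
    by (rule Max_eqI) (use assms in \<open>auto simp: in_keys_iff\<close>)
  then show ?thesis by (intro poly_mapping_eqI) (simp add: lookup_dsym assms(4))
qed

lemma dord_le: assumes "\<And>k. lk M k \<noteq> 0 \<Longrightarrow> deg k \<le> n" shows "dord M \<le> ereal (real n)"
proof (cases "M = 0")
  case False
  have "Max ((\<lambda>(i,j). i + j) ` ks M) \<le> n"
    using False assms by (subst Max_le_iff) (auto simp: in_keys_iff deg_def)
  then show ?thesis using False by (simp add: dord_def)
qed (simp add: dord_def)

lemma dord_ge: assumes "lk M k \<noteq> 0" shows "ereal (real (deg k)) \<le> dord M"
proof -
  have "M \<noteq> 0" using assms by auto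
  moreover have "deg k \<le> Max ((\<lambda>(i,j). i + j) ` ks M)"
    using assms by (intro Max_ge) (auto simp: in_keys_iff deg_def)
  ultimately show ?thesis by (simp add: dord_def)
qed

lemma comp1:
  fixes dx dy :: "'a::field \<Rightarrow> 'a"
  assumes "dx 0 = 0" "dy 0 = 0" "dx 1 = 0"
  shows "dcomp dx dy (mon 1 1 0 + mon r 0 0) (mon 1 1 1 + mon 1 0 2 + mon b10 1 0 + mon b01 0 1 + mon b00 0 0)
   = mon 1 2 1 + mon 1 1 2 + mon b10 2 0 + mon (b01 + r) 1 1 + mon r 0 2 + mon (dx b10 + b00 + r*b10) 1 0
     + mon (dx b01 + r * b01) 0 1 + mon (dx b00 + r*b00) 0 0"
proof -
  have k1: "ks (mon 1 1 0 + mon r 0 0) \<subseteq> {(1,0),(0,0)}"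
    by (rule order.trans[OF keys_add]) auto
  have k2: "ks (mon 1 1 1 + mon 1 0 2 + mon b10 1 0 + mon b01 0 1 + mon b00 0 0) \<subseteq> {(1,1),(0,2),(1,0),(0,1),(0,0)}"
    by (intro order.trans[OF keys_add] Un_least) (auto dest!: set_mp[OF keys_add])
  show ?thesis
    apply (subst dcomp_superset[where dx=dx and dy=dy, OF assms(1,2) _ _ k1 k2])
      apply simp_all
    apply (simp add: assms(3) lookup_add lookup_single when_def)
    apply (rule poly_mapping_eqI)
    apply (simp add: lookup_add lookup_single when_def numeral_2_eq_2)
    done
qed

lemma comp2:
  fixes dx dy :: "'a::field \<Rightarrow> 'a"
  assumes "dx 0 = 0" "dy 0 = 0" "dy 1 = 0"
  shows "dcomp dx dy (mon 1 0 1 + mon r 0 0) (mon 1 2 0 + mon b10 1 0 + mon b01 0 1 + mon b00 0 0)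
   = mon 1 2 1 + mon b10 1 1 + mon b01 0 2 + mon r 2 0 + mon (dy b10 + r*b10) 1 0
     + mon (dy b01 + b00 + r * b01) 0 1 + mon (dy b00 + r*b00) 0 0"
proof -
  have k1: "ks (mon 1 0 1 + mon r 0 0) \<subseteq> {(0,1),(0,0)}"
    by (rule order.trans[OF keys_add]) auto
  have k2: "ks (mon 1 2 0 + mon b10 1 0 + mon b01 0 1 + mon b00 0 0) \<subseteq> {(2,0),(1,0),(0,1),(0,0)}"
    by (intro order.trans[OF keys_add] Un_least) (auto dest!: set_mp[OF keys_add])
  show ?thesis
    apply (subst dcomp_superset[where dx=dx and dy=dy, OF assms(1,2) _ _ k1 k2])
      apply simp_all
    apply (simp add: assms(3) lookup_add lookup_single when_def)
    apply (rule poly_mapping_eqI)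
    apply (simp add: lookup_add lookup_single when_def numeral_2_eq_2)
    done
qed

lemma F1_form:
  fixes F :: "'a::field dop"
  assumes "dsym F = mon 1 a b" "a + b = 1"
  shows "F = mon 1 a b + mon (lk F (0,0)) 0 0"
proof (rule poly_mapping_eqI)
  fix k :: "nat \<times> nat"
  obtain i j where k: "k = (i,j)" by force
  have nz: "lk (mon (1::'a) a b) (a,b) \<noteq> 0" by simp
  note I = dsym_info[OF assms(1) nz]
  show "lk F k = lk (mon 1 a b + mon (lk F (0,0)) 0 0) k"
  proof (cases "i + j > 1")
    case True
    then have "k \<notin> ks F" using I(2)[of k] assms(2) by (auto simp: k deg_def)
    then show ?thesis using True assms(2) by (auto simp: k in_keys_iff lookup_add lookup_single when_def)
  next
    case False
    then consider "i+j = 1" | "i = 0 \<and> j = 0" by linarith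
    then show ?thesis
    proof cases
      case 1
      then show ?thesis using I(3)[of k] assms(1,2) by (auto simp: k deg_def lookup_add lookup_single when_def)
    next
      case 2
      then show ?thesis using assms(2) by (auto simp: k lookup_add lookup_single when_def)
    qed
  qed
qed

lemma F2_form:
  fixes F :: "'a::field dop"
  assumes "dsym F = S" "lk S kz \<noteq> 0" "deg kz = 2" "\<And>k. k \<in> ks S \<Longrightarrow> deg k = 2"
  shows "F = S + mon (lk F (1,0)) 1 0 + mon (lk F (0,1)) 0 1 + mon (lk F (0,0)) 0 0"
proof (rule poly_mapping_eqI)
  fix k :: "nat \<times> nat"
  obtain i j where k: "k = (i,j)" by force
  note I = dsym_info[OF assms(1,2)]
  have S0: "deg k \<noteq> 2 \<Longrightarrow> lk S k = 0" for k using assms(4)[of k] by (auto simp: in_keys_iff)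
  show "lk F k = lk (S + mon (lk F (1,0)) 1 0 + mon (lk F (0,1)) 0 1 + mon (lk F (0,0)) 0 0) k"
  proof (cases "i + j > 2")
    case True
    then have "k \<notin> ks F" using I(2)[of k] assms(3) by (auto simp: k deg_def)
    then show ?thesis using True S0[of k] by (auto simp: k in_keys_iff lookup_add lookup_single when_def deg_def)
  next
    case False
    then have "i+j=2 \<or> (i=1\<and>j=0) \<or> (i=0\<and>j=1) \<or> (i=0\<and>j=0)" by presburger
    then consider "i+j = 2" | "k = (1,0)" | "k = (0,1)" | "k = (0,0)" using k by auto
    then show ?thesis
    proof cases
      case 1
      then show ?thesis using I(3)[of k] assms(3) by (auto simp: k deg_def lookup_add lookup_single when_def)
    qed (auto simp: lookup_add lookup_single when_def S0 deg_def)
  qed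
qed



lemma deriv_facts:
  fixes dx dy :: "'a::field \<Rightarrow> 'a"
  assumes "diff_field dx dy"
  shows "\<And>a b. dx (a + b) = dx a + dx b" "\<And>a b. dx (a * b) = dx a * b + a * dx b"
    "\<And>a b. dy (a + b) = dy a + dy b" "\<And>a b. dy (a * b) = dy a * b + a * dy b"
    "dx 0 = 0" "dy 0 = 0" "dx 1 = 0" "dy 1 = 0"
    "\<And>a b. dx (a - b) = dx a - dx b" "\<And>a b. dy (a - b) = dy a - dy b"
    "\<And>a. dx (- a) = - dx a" "\<And>a. dy (- a) = - dy a"
proof -
  show A: "\<And>a b. dx (a + b) = dx a + dx b" "\<And>a b. dx (a * b) = dx a * b + a * dx b"
    "\<And>a b. dy (a + b) = dy a + dy b" "\<And>a b. dy (a * b) = dy a * b + a * dy b"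
    using assms unfolding diff_field_def by auto
  show "dx 0 = 0" using A(1)[of 0 0] by (simp only: add_0_left mult_1_left mult_1_right add_cancel_right_right)
  show "dy 0 = 0" using A(3)[of 0 0] by (simp only: add_0_left mult_1_left mult_1_right add_cancel_right_right)
  show "dx 1 = 0" using A(2)[of 1 1] by (simp only: add_0_left mult_1_left mult_1_right add_cancel_right_right)
  show "dy 1 = 0" using A(4)[of 1 1] by (simp only: add_0_left mult_1_left mult_1_right add_cancel_right_right)
  show "dx (a - b) = dx a - dx b" for a b using A(1)[of "a - b" b] by simp
  show dyd: "dy (a - b) = dy a - dy b" for a b using A(3)[of "a - b" b] by simp
  show "dx (- a) = - dx a" for a using A(1)[of "- a" a] \<open>dx 0 = 0\<close> by (simp add: eq_neg_iff_add_eq_0)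
  show "dy (- a) = - dy a" for a using A(3)[of "- a" a] \<open>dy 0 = 0\<close> by (simp add: eq_neg_iff_add_eq_0)
qed



lemma part1:
  fixes dx dy :: "'a::field \<Rightarrow> 'a"
    and a20 a11 a02 a10 a01 a00 :: 'a
  assumes df: "diff_field dx dy"
  shows
   "common_obstacle dx dy (mon 1 1 0) (mon 1 1 1 + mon 1 0 2)
      (hat (mon 1 2 1 + mon 1 1 2) + mon a20 2 0 + mon a11 1 1 + mon a02 0 2
         + mon a10 1 0 + mon a01 0 1 + mon a00 0 0)
      (mon (a02^2 - a11 * a02 + a01 + dx (a02 - a11)) 0 1
       + mon (a00 - a02 * a10 + a02^2 * a20 + 2 * a02 * dx a20 - dx a10
              + a20 * dx a02 + dx (dx a20)) 0 0)"
proof -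
  note D = deriv_facts[OF df]
  define L where "L = hat (mon 1 2 1 + mon 1 1 2) + mon a20 2 0 + mon a11 1 1 + mon a02 0 2
         + mon a10 1 0 + mon a01 0 1 + mon a00 0 0"
  define R1 where "R1 = a02^2 - a11 * a02 + a01 + dx (a02 - a11)"
  define R0 where "R0 = a00 - a02 * a10 + a02^2 * a20 + 2 * a02 * dx a20 - dx a10
              + a20 * dx a02 + dx (dx a20)"
  define R where "R = mon R1 0 1 + mon R0 0 0"
  have lkL: "lk L k = lk (mon 1 2 1 + mon 1 1 2 + mon a20 2 0 + mon a11 1 1 + mon a02 0 2
         + mon a10 1 0 + mon a01 0 1 + mon a00 0 0) k" for k
    by (simp add: L_def hat_def)
  define S2 :: "'a dop" where "S2 = mon 1 1 1 + mon 1 0 2"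
  have ex: "has_factorization dx dy (mon 1 1 0) S2 (L - R)"
  proof -
    define b00 where "b00 = a10 - dx a20 - a02*a20"
    define F1 :: "'a dop" where "F1 = mon 1 1 0 + mon a02 0 0"
    define F2 where "F2 = S2 + mon a20 1 0 + mon (a11 - a02) 0 1 + mon b00 0 0"
    have "dcomp dx dy F1 F2 = mon 1 2 1 + mon 1 1 2 + mon a20 2 0 + mon (a11 - a02 + a02) 1 1 + mon a02 0 2
       + mon (dx a20 + b00 + a02*a20) 1 0
     + mon (dx (a11 - a02) + a02 * (a11 - a02)) 0 1 + mon (dx b00 + a02*b00) 0 0"
      unfolding F1_def F2_def S2_def by (rule comp1[where dx=dx and dy=dy, OF D(5,6,7)])
    also have "\<dots> = mon 1 2 1 + mon 1 1 2 + mon a20 2 0 + mon a11 1 1 + mon a02 0 2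
       + mon a10 1 0 + mon (a01 - R1) 0 1 + mon (a00 - R0) 0 0"
    proof -
      have c1: "a11 - a02 + a02 = a11" by simp
      have c2: "dx a20 + b00 + a02*a20 = a10" by (simp add: b00_def)
      have c3: "dx (a11 - a02) + a02 * (a11 - a02) = a01 - R1"
        by (simp add: R1_def D algebra_simps power2_eq_square)
      have c4: "dx b00 + a02*b00 = a00 - R0"
        by (simp add: R0_def b00_def D algebra_simps power2_eq_square)
      show ?thesis unfolding c1 c2 c3 c4 ..
    qed
    also have "\<dots> = L - R"
    proof (rule poly_mapping_eqI)
      fix k :: "nat \<times> nat"
      show "lk (mon 1 2 1 + mon 1 1 2 + mon a20 2 0 + mon a11 1 1 + mon a02 0 2
       + mon a10 1 0 + mon (a01 - R1) 0 1 + mon (a00 - R0) 0 0) k = lk (L - R) k"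
        unfolding lookup_minus lkL R_def
        by (auto simp: lookup_add lookup_single when_def)
    qed
    finally have e: "L - R = dcomp dx dy F1 F2" by simp
    have s1: "dsym F1 = mon 1 1 0"
      by (rule dsym_eq[where d=1 and kz="(1,0)"])
        (auto simp: F1_def lookup_add lookup_single when_def deg_def split: if_splits)
    have s2: "dsym F2 = S2"
      by (rule dsym_eq[where d=2 and kz="(1,1)"])
        (auto simp: F2_def S2_def lookup_add lookup_single when_def deg_def split: if_splits)
    show ?thesis unfolding has_factorization_def using e s1 s2 by blast
  qed
  have min: "dord R \<le> dord R'" if fac: "has_factorization dx dy (mon 1 1 0) S2 (L - R')" for R'
  proof -
    obtain F1 F2 where e: "L - R' = dcomp dx dy F1 F2" and s1: "dsym F1 = mon 1 1 0" and s2: "dsym F2 = S2"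
      using fac unfolding has_factorization_def by blast
    define r where "r = lk F1 (0,0)"
    define b10 where "b10 = lk F2 (1,0)"
    define b01 where "b01 = lk F2 (0,1)"
    define b00 where "b00 = lk F2 (0,0)"
    have f1: "F1 = mon 1 1 0 + mon r 0 0" unfolding r_def by (rule F1_form[OF s1]) simp
    have f2: "F2 = S2 + mon b10 1 0 + mon b01 0 1 + mon b00 0 0"
      unfolding b10_def b01_def b00_def
    proof (rule F2_form[OF s2, where kz="(1,1)"])
      show "k \<in> ks S2 \<Longrightarrow> deg k = 2" for k
        using keys_add[of "mon (1::'a) 1 1" "mon 1 0 2"] by (auto simp: S2_def deg_def)
    qed (auto simp: S2_def lookup_add lookup_single deg_def)
    have E: "L - R' = mon 1 2 1 + mon 1 1 2 + mon b10 2 0 + mon (b01 + r) 1 1 + mon r 0 2 + mon (dx b10 + b00 + r*b10) 1 0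
     + mon (dx b01 + r * b01) 0 1 + mon (dx b00 + r*b00) 0 0"
      unfolding e f1 f2 S2_def by (rule comp1[where dx=dx and dy=dy, OF D(5,6,7)])
    have lkR: "lk R k \<noteq> 0 \<Longrightarrow> deg k \<le> 1" for k
      by (auto simp: R_def lookup_add lookup_single when_def deg_def split: if_splits)
    show ?thesis
    proof (cases "\<exists>k. lk R' k \<noteq> 0 \<and> 1 \<le> deg k")
      case True
      then obtain k where k: "lk R' k \<noteq> 0" "1 \<le> deg k" by blast
      have "dord R \<le> ereal (real 1)" by (rule dord_le) (use lkR in auto)
      also have "\<dots> \<le> ereal (real (deg k))" using k by simp
      also have "\<dots> \<le> dord R'" by (rule dord_ge[OF k(1)])
      finally show ?thesis .
    next
      case False
      then have z: "deg k \<noteq> 0 \<Longrightarrow> lk R' k = 0" for k by (metis less_one not_le)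
      have ev: "lk L k - lk R' k = lk (mon 1 2 1 + mon 1 1 2 + mon b10 2 0 + mon (b01 + r) 1 1 + mon r 0 2 + mon (dx b10 + b00 + r*b10) 1 0
         + mon (dx b01 + r * b01) 0 1 + mon (dx b00 + r*b00) 0 0) k" for k
        using arg_cong[OF E, of "\<lambda>M. lk M k"] by (simp add: lookup_minus)
      have q20: "a20 = b10" using ev[of "(2,0)"] z[of "(2,0)"] by (simp add: lkL lookup_add lookup_single deg_def)
      have q11: "a11 = b01 + r" using ev[of "(1,1)"] z[of "(1,1)"] by (simp add: lkL lookup_add lookup_single deg_def)
      have q02: "a02 = r" using ev[of "(0,2)"] z[of "(0,2)"] by (simp add: lkL lookup_add lookup_single deg_def)
      have q10: "a10 = dx b10 + b00 + r*b10" using ev[of "(1,0)"] z[of "(1,0)"] by (simp add: lkL lookup_add lookup_single deg_def)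
      have q01: "a01 = dx b01 + r * b01" using ev[of "(0,1)"] z[of "(0,1)"] by (simp add: lkL lookup_add lookup_single deg_def)
      have q00: "a00 = dx b00 + r*b00 + lk R' (0,0)" using ev[of "(0,0)"] by (simp add: lkL lookup_add lookup_single algebra_simps)
      have r1: "R1 = 0" unfolding R1_def q11 q01 q02 by (simp add: D algebra_simps power2_eq_square)
      have r0: "R0 = lk R' (0,0)" unfolding R0_def q00 q10 q02 q20 by (simp add: D algebra_simps power2_eq_square)
      have "R = R'"
      proof (rule poly_mapping_eqI)
        fix k :: "nat \<times> nat"
        show "lk R k = lk R' k"
          using z[of k] by (cases k) (auto simp: R_def r1 r0 lookup_add lookup_single when_def deg_def)
      qed
      then show ?thesis by simp
    qed
  qed
  show ?thesis
    unfolding common_obstacle_def L_def[symmetric] S2_def[symmetric]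
      R1_def[symmetric] R0_def[symmetric] R_def[symmetric]
    using ex min by blast
qed



lemma part2:
  fixes dx dy :: "'a::field \<Rightarrow> 'a"
    and a20 a11 a02 a10 a01 a00 :: 'a
  assumes df: "diff_field dx dy"
  shows
    "common_obstacle dx dy (mon 1 0 1) (mon 1 2 0)
      (hat (mon 1 2 1) + mon a20 2 0 + mon a11 1 1 + mon a02 0 2
         + mon a10 1 0 + mon a01 0 1 + mon a00 0 0)
      (mon (a10 - a20 * a11 - dy a11) 1 0
       + mon (a00 - a20 * a01 + a20^2 * a02 + 2 * a20 * dy a02 - dy a01
              + a02 * dy a20 + dy (dy a02)) 0 0)"
proof -
  note D = deriv_facts[OF df]
  define L where "L = hat (mon 1 2 1) + mon a20 2 0 + mon a11 1 1 + mon a02 0 2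
         + mon a10 1 0 + mon a01 0 1 + mon a00 0 0"
  define R1 where "R1 = a10 - a20 * a11 - dy a11"
  define R0 where "R0 = a00 - a20 * a01 + a20^2 * a02 + 2 * a20 * dy a02 - dy a01
              + a02 * dy a20 + dy (dy a02)"
  define R where "R = mon R1 1 0 + mon R0 0 0"
  have lkL: "lk L k = lk (mon 1 2 1 + mon a20 2 0 + mon a11 1 1 + mon a02 0 2
         + mon a10 1 0 + mon a01 0 1 + mon a00 0 0) k" for k
    by (simp add: L_def hat_def)
  define S2 :: "'a dop" where "S2 = mon 1 2 0"
  have ex: "has_factorization dx dy (mon 1 0 1) S2 (L - R)"
  proof -
    define b00 where "b00 = a01 - dy a02 - a20*a02"
    define F1 :: "'a dop" where "F1 = mon 1 0 1 + mon a20 0 0"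
    define F2 where "F2 = S2 + mon a11 1 0 + mon a02 0 1 + mon b00 0 0"
    have "dcomp dx dy F1 F2 = mon 1 2 1 + mon a11 1 1 + mon a02 0 2 + mon a20 2 0 + mon (dy a11 + a20*a11) 1 0
     + mon (dy a02 + b00 + a20 * a02) 0 1 + mon (dy b00 + a20*b00) 0 0"
      unfolding F1_def F2_def S2_def by (rule comp2[where dx=dx and dy=dy, OF D(5,6,8)])
    also have "\<dots> = mon 1 2 1 + mon a11 1 1 + mon a02 0 2 + mon a20 2 0 + mon (a10 - R1) 1 0
     + mon a01 0 1 + mon (a00 - R0) 0 0"
    proof -
      have c1: "dy a11 + a20*a11 = a10 - R1" by (simp add: R1_def)
      have c2: "dy a02 + b00 + a20 * a02 = a01" by (simp add: b00_def)
      have c3: "dy b00 + a20*b00 = a00 - R0"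
        by (simp add: R0_def b00_def D algebra_simps power2_eq_square)
      show ?thesis unfolding c1 c2 c3 ..
    qed
    also have "\<dots> = L - R"
    proof (rule poly_mapping_eqI)
      fix k :: "nat \<times> nat"
      show "lk (mon 1 2 1 + mon a11 1 1 + mon a02 0 2 + mon a20 2 0 + mon (a10 - R1) 1 0
         + mon a01 0 1 + mon (a00 - R0) 0 0) k = lk (L - R) k"
        unfolding lookup_minus lkL R_def
        by (auto simp: lookup_add lookup_single when_def)
    qed
    finally have e: "L - R = dcomp dx dy F1 F2" by simp
    have s1: "dsym F1 = mon 1 0 1"
      by (rule dsym_eq[where d=1 and kz="(0,1)"])
        (auto simp: F1_def lookup_add lookup_single when_def deg_def split: if_splits)
    have s2: "dsym F2 = S2"
      by (rule dsym_eq[where d=2 and kz="(2,0)"])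
        (auto simp: F2_def S2_def lookup_add lookup_single when_def deg_def split: if_splits)
    show ?thesis unfolding has_factorization_def using e s1 s2 by blast
  qed
  have min: "dord R \<le> dord R'" if fac: "has_factorization dx dy (mon 1 0 1) S2 (L - R')" for R'
  proof -
    obtain F1 F2 where e: "L - R' = dcomp dx dy F1 F2" and s1: "dsym F1 = mon 1 0 1" and s2: "dsym F2 = S2"
      using fac unfolding has_factorization_def by blast
    define r where "r = lk F1 (0,0)"
    define b10 where "b10 = lk F2 (1,0)"
    define b01 where "b01 = lk F2 (0,1)"
    define b00 where "b00 = lk F2 (0,0)"
    have f1: "F1 = mon 1 0 1 + mon r 0 0" unfolding r_def by (rule F1_form[OF s1]) simp
    have f2: "F2 = S2 + mon b10 1 0 + mon b01 0 1 + mon b00 0 0"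
      unfolding b10_def b01_def b00_def
    proof (rule F2_form[OF s2, where kz="(2,0)"])
      show "k \<in> ks S2 \<Longrightarrow> deg k = 2" for k
        by (auto simp: S2_def deg_def)
    qed (auto simp: S2_def lookup_add lookup_single deg_def)
    have E: "L - R' = mon 1 2 1 + mon b10 1 1 + mon b01 0 2 + mon r 2 0 + mon (dy b10 + r*b10) 1 0
     + mon (dy b01 + b00 + r * b01) 0 1 + mon (dy b00 + r*b00) 0 0"
      unfolding e f1 f2 S2_def by (rule comp2[where dx=dx and dy=dy, OF D(5,6,8)])
    have lkR: "lk R k \<noteq> 0 \<Longrightarrow> deg k \<le> 1" for k
      by (auto simp: R_def lookup_add lookup_single when_def deg_def split: if_splits)
    show ?thesis
    proof (cases "\<exists>k. lk R' k \<noteq> 0 \<and> 1 \<le> deg k")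
      case True
      then obtain k where k: "lk R' k \<noteq> 0" "1 \<le> deg k" by blast
      have "dord R \<le> ereal (real 1)" by (rule dord_le) (use lkR in auto)
      also have "\<dots> \<le> ereal (real (deg k))" using k by simp
      also have "\<dots> \<le> dord R'" by (rule dord_ge[OF k(1)])
      finally show ?thesis .
    next
      case False
      then have z: "deg k \<noteq> 0 \<Longrightarrow> lk R' k = 0" for k by (metis less_one not_le)
      have ev: "lk L k - lk R' k = lk (mon 1 2 1 + mon b10 1 1 + mon b01 0 2 + mon r 2 0 + mon (dy b10 + r*b10) 1 0
     + mon (dy b01 + b00 + r * b01) 0 1 + mon (dy b00 + r*b00) 0 0) k" for k
        using arg_cong[OF E, of "\<lambda>M. lk M k"] by (simp add: lookup_minus)
      have q20: "a20 = r" using ev[of "(2,0)"] z[of "(2,0)"] by (simp add: lkL lookup_add lookup_single deg_def)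
      have q11: "a11 = b10" using ev[of "(1,1)"] z[of "(1,1)"] by (simp add: lkL lookup_add lookup_single deg_def)
      have q02: "a02 = b01" using ev[of "(0,2)"] z[of "(0,2)"] by (simp add: lkL lookup_add lookup_single deg_def)
      have q10: "a10 = dy b10 + r*b10" using ev[of "(1,0)"] z[of "(1,0)"] by (simp add: lkL lookup_add lookup_single deg_def)
      have q01: "a01 = dy b01 + b00 + r * b01" using ev[of "(0,1)"] z[of "(0,1)"] by (simp add: lkL lookup_add lookup_single deg_def)
      have q00: "a00 = dy b00 + r*b00 + lk R' (0,0)" using ev[of "(0,0)"] by (simp add: lkL lookup_add lookup_single algebra_simps)
      have r1: "R1 = 0" unfolding R1_def q11 q10 q20 by (simp add: D algebra_simps)
      have r0: "R0 = lk R' (0,0)" unfolding R0_def q00 q01 q02 q20 by (simp add: D algebra_simps power2_eq_square)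
      have "R = R'"
      proof (rule poly_mapping_eqI)
        fix k :: "nat \<times> nat"
        show "lk R k = lk R' k"
          using z[of k] by (cases k) (auto simp: R_def r1 r0 lookup_add lookup_single when_def deg_def)
      qed
      then show ?thesis by simp
    qed
  qed
  show ?thesis
    unfolding common_obstacle_def L_def[symmetric] S2_def[symmetric]
      R1_def[symmetric] R0_def[symmetric] R_def[symmetric]
    using ex min by blast
qed

theorem mainTheorem13:
  fixes dx dy :: "'a::field \<Rightarrow> 'a"
    and a20 a11 a02 a10 a01 a00 :: 'a
  assumes "diff_field dx dy"
  shows
   "common_obstacle dx dy (mon 1 1 0) (mon 1 1 1 + mon 1 0 2)
      (hat (mon 1 2 1 + mon 1 1 2) + mon a20 2 0 + mon a11 1 1 + mon a02 0 2
         + mon a10 1 0 + mon a01 0 1 + mon a00 0 0)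
      (mon (a02^2 - a11 * a02 + a01 + dx (a02 - a11)) 0 1
       + mon (a00 - a02 * a10 + a02^2 * a20 + 2 * a02 * dx a20 - dx a10
              + a20 * dx a02 + dx (dx a20)) 0 0)
    \<and>
    common_obstacle dx dy (mon 1 0 1) (mon 1 2 0)
      (hat (mon 1 2 1) + mon a20 2 0 + mon a11 1 1 + mon a02 0 2
         + mon a10 1 0 + mon a01 0 1 + mon a00 0 0)
      (mon (a10 - a20 * a11 - dy a11) 1 0
       + mon (a00 - a20 * a01 + a20^2 * a02 + 2 * a20 * dy a02 - dy a01
              + a02 * dy a20 + dy (dy a02)) 0 0)"
  using part1[OF assms] part2[OF assms] by blast

end
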